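(* Let $G=(V,E)$ be a strongly semiconnected digraph and let $P$ be a principal cycle set of $G$. For each edge $e\in E$ let $w(e)$ be the number of elements of $P$ containing $e$. Then the weights $w(e)$, $e\in E$, are positive integers and make $G$ weight-balanced.
   Context: A digraph $G=(V,E)$ has finite $V$ and $E\subseteq V\times V$ (self-loops allowed). $G$ is strongly semiconnected if, for all $v,w\in V$, the existence of a directed path from $v$ to $w$ implies the existence of one from $w$ to $v$. A cycle is a directed path $v_{i_1},\dots,v_{i_k},v_{i_1}$ with distinct $v_{i_1},\dots,v_{i_k}$ (self-loops are cycles), viewed as a subdigraph. $\mathcal{C}(G)$ is the set of subdigraphs of $G$ that are a single edgeless vertex, a cycle, or a union of pairwise vertex-disjoint cycles. A family generates $G$ if the union of vertex sets is $V$ and of edge sets is $E$. A principal cycle set is a subset of $\mathcal{C}(G)$ generating $G$ of minimum cardinality among such subsets. Weights on edges make $G$ weight-balanced if at each vertex the sum of weights of incoming edges equals the sum of weights of outgoing edges. *)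

theory Defs
  imports Main
begin

text \<open>A digraph is a pair (V, E) with V finite and E a subset of V x V (self-loops allowed).
  Subdigraphs are represented as pairs (vertex set, edge set).\<close>

definition digraph :: "'a set \<Rightarrow> ('a \<times> 'a) set \<Rightarrow> bool" where
  "digraph V E \<longleftrightarrow> finite V \<and> E \<subseteq> V \<times> V"

definition strongly_semiconnected :: "'a set \<Rightarrow> ('a \<times> 'a) set \<Rightarrow> bool" where
  "strongly_semiconnected V E \<longleftrightarrow>
     (\<forall>v\<in>V. \<forall>w\<in>V. (v, w) \<in> E\<^sup>* \<longrightarrow> (w, v) \<in> E\<^sup>*)"

text \<open>A cycle given by the list [v1,...,vk] of distinct vertices: edges v_i -> v_(i+1)
  and v_k -> v_1 (k = 1 gives a self-loop).\<close>
definition is_cycle_list :: "('a \<times> 'a) set \<Rightarrow> 'a list \<Rightarrow> bool" where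
  "is_cycle_list E vs \<longleftrightarrow> vs \<noteq> [] \<and> distinct vs \<and>
     (\<forall>i<length vs. (vs ! i, vs ! (Suc i mod length vs)) \<in> E)"

definition cycle_of :: "'a list \<Rightarrow> 'a set \<times> ('a \<times> 'a) set" where
  "cycle_of vs = (set vs, {(vs ! i, vs ! (Suc i mod length vs)) | i. i < length vs})"

definition cycles :: "('a \<times> 'a) set \<Rightarrow> ('a set \<times> ('a \<times> 'a) set) set" where
  "cycles E = {cycle_of vs | vs. is_cycle_list E vs}"

definition CG :: "'a set \<Rightarrow> ('a \<times> 'a) set \<Rightarrow> ('a set \<times> ('a \<times> 'a) set) set" where
  "CG V E = {({v}, {}) | v. v \<in> V} \<union>
     {(\<Union> (fst ` F), \<Union> (snd ` F)) | F. finite F \<and> F \<noteq> {} \<and> F \<subseteq> cycles E \<and>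
        (\<forall>C\<in>F. \<forall>D\<in>F. C \<noteq> D \<longrightarrow> fst C \<inter> fst D = {})}"

definition generates :: "'a set \<Rightarrow> ('a \<times> 'a) set \<Rightarrow> ('a set \<times> ('a \<times> 'a) set) set \<Rightarrow> bool" where
  "generates V E P \<longleftrightarrow> \<Union> (fst ` P) = V \<and> \<Union> (snd ` P) = E"

definition principal_cycle_set ::
  "'a set \<Rightarrow> ('a \<times> 'a) set \<Rightarrow> ('a set \<times> ('a \<times> 'a) set) set \<Rightarrow> bool" where
  "principal_cycle_set V E P \<longleftrightarrow> P \<subseteq> CG V E \<and> generates V E P \<and>
     (\<forall>Q. Q \<subseteq> CG V E \<and> generates V E Q \<longrightarrow> card P \<le> card Q)"

definition weight_balanced :: "'a set \<Rightarrow> ('a \<times> 'a) set \<Rightarrow> ('a \<times> 'a \<Rightarrow> 'b::comm_monoid_add) \<Rightarrow> bool" where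
  "weight_balanced V E w \<longleftrightarrow>
     (\<forall>v\<in>V. (\<Sum>e\<in>{e\<in>E. snd e = v}. w e) = (\<Sum>e\<in>{e\<in>E. fst e = v}. w e))"

end

theory Submission
  imports Defs
begin

lemma shift_card:
  assumes n: "n > 0"
  shows "card {i. i < n \<and> g (Suc i mod n)} = card {j. j < n \<and> g j}"
proof -
  let ?s = "\<lambda>i. Suc i mod n"
  have inj: "inj_on ?s {..<n}"
  proof (rule inj_onI)
    fix i j assume "i \<in> {..<n}" "j \<in> {..<n}" "Suc i mod n = Suc j mod n"
    then show "i = j"
      by (cases "Suc i = n"; cases "Suc j = n") auto
  qed
  have img: "?s ` {i. i < n \<and> g (Suc i mod n)} = {j. j < n \<and> g j}"
  proof
    show "?s ` {i. i < n \<and> g (Suc i mod n)} \<subseteq> {j. j < n \<and> g j}"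
      using n by auto
  next
    show "{j. j < n \<and> g j} \<subseteq> ?s ` {i. i < n \<and> g (Suc i mod n)}"
    proof
      fix j assume j: "j \<in> {j. j < n \<and> g j}"
      show "j \<in> ?s ` {i. i < n \<and> g (Suc i mod n)}"
      proof (cases j)
        case 0
        have "Suc (n - 1) mod n = j" using n 0 by simp
        then show ?thesis using j n by (intro image_eqI[of _ _ "n - 1"]) auto
      next
        case (Suc k)
        have "Suc k mod n = j" using j Suc by simp
        then show ?thesis using j Suc by (intro image_eqI[of _ _ k]) auto
      qed
    qed
  qed
  have "card (?s ` {i. i < n \<and> g (Suc i mod n)}) = card {i. i < n \<and> g (Suc i mod n)}"
    by (rule card_image, rule inj_on_subset[OF inj]) auto
  with img show ?thesis by simp
qed

lemma cycle_balanced: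
  assumes "is_cycle_list E vs"
  shows "card {e \<in> snd (cycle_of vs). snd e = v} = card {e \<in> snd (cycle_of vs). fst e = v}"
proof -
  define n where "n = length vs"
  define f where "f i = (vs ! i, vs ! (Suc i mod n))" for i
  have n: "n > 0" and d: "distinct vs" using assms unfolding is_cycle_list_def n_def by auto
  have S: "snd (cycle_of vs) = f ` {..<n}" unfolding cycle_of_def f_def n_def by auto
  have inj: "inj_on f {..<n}"
    by (rule inj_onI) (auto simp: f_def n_def nth_eq_iff_index_eq[OF d])
  have o: "{e \<in> snd (cycle_of vs). fst e = v} = f ` {i. i < n \<and> vs ! i = v}"
    unfolding S by (auto simp: f_def)
  have i: "{e \<in> snd (cycle_of vs). snd e = v} = f ` {i. i < n \<and> vs ! (Suc i mod n) = v}"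
    unfolding S by (auto simp: f_def)
  have co: "card {e \<in> snd (cycle_of vs). fst e = v} = card {i. i < n \<and> vs ! i = v}"
    unfolding o by (rule card_image, rule inj_on_subset[OF inj]) auto
  have ci: "card {e \<in> snd (cycle_of vs). snd e = v} = card {i. i < n \<and> vs ! (Suc i mod n) = v}"
    unfolding i by (rule card_image, rule inj_on_subset[OF inj]) auto
  show ?thesis using co ci shift_card[OF n, of "\<lambda>j. vs ! j = v"] by simp
qed

lemma cycle_edges_sub:
  assumes "C \<in> cycles E"
  shows "snd C \<subseteq> fst C \<times> fst C" "fst C \<noteq> {}" "finite (snd C)"
proof -
  obtain vs where C: "C = cycle_of vs" and c: "is_cycle_list E vs"
    using assms unfolding cycles_def by auto
  have n: "length vs > 0" using c unfolding is_cycle_list_def by auto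
  show "snd C \<subseteq> fst C \<times> fst C" unfolding C cycle_of_def using n by auto
  show "fst C \<noteq> {}" unfolding C cycle_of_def using c unfolding is_cycle_list_def by auto
  have "snd C = (\<lambda>i. (vs ! i, vs ! (Suc i mod length vs))) ` {..<length vs}"
    unfolding C cycle_of_def by auto
  then show "finite (snd C)" by simp
qed

lemma CG_balanced:
  assumes "H \<in> CG V E"
  shows "card {e \<in> snd H. snd e = v} = card {e \<in> snd H. fst e = v}"
proof -
  consider (a) u where "H = ({u}, {})"
    | (b) F where "H = (\<Union> (fst ` F), \<Union> (snd ` F))" "finite F" "F \<subseteq> cycles E"
        "\<forall>C\<in>F. \<forall>D\<in>F. C \<noteq> D \<longrightarrow> fst C \<inter> fst D = {}"
    using assms unfolding CG_def by blast
  then show ?thesis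
  proof cases
    case a then show ?thesis by simp
  next
    case b
    have disj: "\<forall>C\<in>F. \<forall>D\<in>F. C \<noteq> D \<longrightarrow> snd C \<inter> snd D = {}"
    proof (intro ballI impI)
      fix C D assume "C \<in> F" "D \<in> F" "C \<noteq> D"
      then have "fst C \<inter> fst D = {}" "snd C \<subseteq> fst C \<times> fst C" "snd D \<subseteq> fst D \<times> fst D"
        using b cycle_edges_sub by blast+
      then show "snd C \<inter> snd D = {}" by blast
    qed
    have fin: "\<forall>C\<in>F. finite (snd C)" using b cycle_edges_sub by blast
    have eq: "\<And>P. {e \<in> snd H. P e} = (\<Union>C\<in>F. {e \<in> snd C. P e})" using b by auto
    have cu: "card {e \<in> snd H. P e} = (\<Sum>C\<in>F. card {e \<in> snd C. P e})" for P
      unfolding eq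
    proof (rule card_UN_disjoint)
      show "finite F" using b by simp
      show "\<forall>C\<in>F. finite {e \<in> snd C. P e}" using fin by simp
      show "\<forall>C\<in>F. \<forall>D\<in>F. C \<noteq> D \<longrightarrow> {e \<in> snd C. P e} \<inter> {e \<in> snd D. P e} = {}"
      proof (intro ballI impI)
        fix C D assume "C \<in> F" "D \<in> F" "C \<noteq> D"
        then have "snd C \<inter> snd D = {}" using disj by simp
        then show "{e \<in> snd C. P e} \<inter> {e \<in> snd D. P e} = {}" by auto
      qed
    qed
    have cc: "\<And>C. C \<in> F \<Longrightarrow> card {e \<in> snd C. snd e = v} = card {e \<in> snd C. fst e = v}"
    proof -
      fix C assume "C \<in> F"
      then obtain vs where "C = cycle_of vs" "is_cycle_list E vs"
        using b unfolding cycles_def by auto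
      then show "card {e \<in> snd C. snd e = v} = card {e \<in> snd C. fst e = v}"
        using cycle_balanced by simp
    qed
    show ?thesis unfolding cu using cc by (rule sum.cong[OF refl])
  qed
qed

lemma CG_finite:
  assumes "digraph V E"
  shows "finite (CG V E)"
proof -
  have fV: "finite V" and EV: "E \<subseteq> V \<times> V" using assms unfolding digraph_def by auto
  have "cycles E \<subseteq> cycle_of ` {vs. set vs \<subseteq> V \<and> length vs \<le> card V}"
  proof
    fix C assume "C \<in> cycles E"
    then obtain vs where C: "C = cycle_of vs" and c: "is_cycle_list E vs"
      unfolding cycles_def by auto
    have "set vs \<subseteq> V"
    proof
      fix x assume "x \<in> set vs"
      then obtain i where "i < length vs" "x = vs ! i" by (auto simp: in_set_conv_nth)
      then have "(x, vs ! (Suc i mod length vs)) \<in> E" using c unfolding is_cycle_list_def by auto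
      then show "x \<in> V" using EV by auto
    qed
    moreover have "length vs \<le> card V"
    proof -
      have "distinct vs" using c unfolding is_cycle_list_def by simp
      then have "length vs = card (set vs)" by (simp add: distinct_card)
      also have "\<dots> \<le> card V" using \<open>set vs \<subseteq> V\<close> fV by (rule card_mono[rotated])
      finally show ?thesis .
    qed
    ultimately show "C \<in> cycle_of ` {vs. set vs \<subseteq> V \<and> length vs \<le> card V}" using C by auto
  qed
  then have fc: "finite (cycles E)" using finite_lists_length_le[OF fV] finite_subset by blast
  have "CG V E \<subseteq> (\<lambda>v. ({v}, {})) ` V \<union> (\<lambda>F. (\<Union> (fst ` F), \<Union> (snd ` F))) ` Pow (cycles E)"
    unfolding CG_def by blast
  moreover have "finite ((\<lambda>v. ({v}, {})) ` V \<union> (\<lambda>F. (\<Union> (fst ` F), \<Union> (snd ` F))) ` Pow (cycles E))"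
    using fc fV by simp
  ultimately show ?thesis by (rule finite_subset)
qed

theorem lemma2p5:
  fixes V :: "'a set" and E :: "('a \<times> 'a) set"
    and P :: "('a set \<times> ('a \<times> 'a) set) set"
  assumes "digraph V E"
    and "strongly_semiconnected V E"
    and "principal_cycle_set V E P"
  defines "w \<equiv> (\<lambda>e. int (card {H \<in> P. e \<in> snd H}))"
  shows "(\<forall>e\<in>E. w e > 0) \<and> weight_balanced V E w"
proof -
  have PC: "P \<subseteq> CG V E" and gen: "\<Union> (snd ` P) = E"
    using assms(3) unfolding principal_cycle_set_def generates_def by auto
  have fP: "finite P" using PC CG_finite[OF assms(1)] by (rule finite_subset)
  have fE: "finite E" proof -
    have "finite V" "E \<subseteq> V \<times> V" using assms(1) unfolding digraph_def by auto
    then show ?thesis by (meson finite_SigmaI finite_subset)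
  qed
  have pos: "\<forall>e\<in>E. w e > 0"
  proof
    fix e assume "e \<in> E"
    then obtain H where "H \<in> P" "e \<in> snd H" using gen by auto
    then have "{H \<in> P. e \<in> snd H} \<noteq> {}" by blast
    moreover have "finite {H \<in> P. e \<in> snd H}" using fP by simp
    ultimately have "card {H \<in> P. e \<in> snd H} > 0" by (intro card_gt_0_iff[THEN iffD2] conjI)
    then show "w e > 0" unfolding w_def by simp
  qed
  have key: "\<And>Q. (\<Sum>e\<in>{e\<in>E. Q e}. card {H \<in> P. e \<in> snd H}) = (\<Sum>H\<in>P. card {e \<in> snd H. Q e})"
  proof -
    fix Q :: "'a \<times> 'a \<Rightarrow> bool"
    have "(\<Sum>e\<in>{e\<in>E. Q e}. card {H \<in> P. e \<in> snd H})
        = (\<Sum>e\<in>{e\<in>E. Q e}. \<Sum>H\<in>P. if e \<in> snd H then 1 else 0)"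
    proof (rule sum.cong[OF refl])
      fix e
      show "card {H \<in> P. e \<in> snd H} = (\<Sum>H\<in>P. if e \<in> snd H then 1 else 0)"
        using sum.inter_filter[OF fP, of "\<lambda>_. 1::nat" "\<lambda>H. e \<in> snd H"] by simp
    qed
    also have "\<dots> = (\<Sum>H\<in>P. \<Sum>e\<in>{e\<in>E. Q e}. if e \<in> snd H then 1 else 0)"
      by (rule sum.swap)
    also have "\<dots> = (\<Sum>H\<in>P. card {e \<in> snd H. Q e})"
    proof (rule sum.cong[OF refl])
      fix H assume "H \<in> P"
      then have "snd H \<subseteq> E" using gen by auto
      then have "{x \<in> {e\<in>E. Q e}. x \<in> snd H} = {e \<in> snd H. Q e}" by auto
      moreover have "finite {e\<in>E. Q e}" using fE by simp
      ultimately show "(\<Sum>e\<in>{e\<in>E. Q e}. if e \<in> snd H then 1 else 0) = card {e \<in> snd H. Q e}"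
        using sum.inter_filter[of "{e\<in>E. Q e}" "\<lambda>_. 1::nat" "\<lambda>e. e \<in> snd H"] by simp
    qed
    finally show "(\<Sum>e\<in>{e\<in>E. Q e}. card {H \<in> P. e \<in> snd H}) = (\<Sum>H\<in>P. card {e \<in> snd H. Q e})" .
  qed
  have bal: "weight_balanced V E w"
    unfolding weight_balanced_def
  proof
    fix v assume "v \<in> V"
    have "(\<Sum>e\<in>{e\<in>E. snd e = v}. w e) = int (\<Sum>H\<in>P. card {e \<in> snd H. snd e = v})"
      unfolding w_def key[symmetric] by simp
    also have "\<dots> = int (\<Sum>H\<in>P. card {e \<in> snd H. fst e = v})"
    proof -
      have "\<And>H. H \<in> P \<Longrightarrow> card {e \<in> snd H. snd e = v} = card {e \<in> snd H. fst e = v}"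
        using PC by (intro CG_balanced) auto
      then show ?thesis by (simp cong: sum.cong)
    qed
    also have "\<dots> = (\<Sum>e\<in>{e\<in>E. fst e = v}. w e)"
      unfolding w_def key[symmetric] by simp
    finally show "(\<Sum>e\<in>{e\<in>E. snd e = v}. w e) = (\<Sum>e\<in>{e\<in>E. fst e = v}. w e)" .
  qed
  show ?thesis using pos bal by (rule conjI)
qed

end
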